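(* Let $k\ge 0$ and let $\mathcal{M}$ be a uniform oriented matroid of rank $r\ge 2$ on $n=r+k$ elements (i.e. of corank $k$). Then $$\operatorname{diam}(G^*(\mathcal{M}))\le \max\{\operatorname{diam}(G^*(\mathcal{M}')) : \mathcal{M}' \text{ a uniform oriented matroid of rank } r' \text{ on } r'+k \text{ elements},\ 2\le r'\le k+2\}.$$
   Context: Sign vectors: for a finite set $E$ and $X\in\{+,-,0\}^E$, write $X^+=\{e:X_e=+\}$, $X^-=\{e:X_e=-\}$, $X^0=\{e:X_e=0\}$, $\operatorname{supp}(X)=X^+\cup X^-$, and $-X$ for the componentwise negation. For sign vectors $X,Y$, the separating set is $S(X,Y)=(X^+\cap Y^-)\cup(X^-\cap Y^+)$, and the composition $X\circ Y$ is given by $(X\circ Y)_e=X_e$ if $X_e\neq 0$ and $(X\circ Y)_e=Y_e$ otherwise. An oriented matroid $\mathcal{M}=(E,\mathcal{C}^* )$ is a finite set $E$ together with a set $\mathcal{C}^*\subseteq\{+,-,0\}^E$ of (signed) cocircuits satisfying: (CC0) $\mathbf{0}\notin\mathcal{C}^*$; (CC1) $X\in\mathcal{C}^*\Rightarrow -X\in\mathcal{C}^*$; (CC2) if $X,Y\in\mathcal{C}^*$ and $\operatorname{supp}(X)\subseteq\operatorname{supp}(Y)$ then $X=\pm Y$; (CC3) if $X,Y\in\mathcal{C}^*$, $X\neq -Y$ and $e\in S(X,Y)$, then there is $Z\in\mathcal{C}^*$ with $Z^+\subseteq (X^+\cup Y^+)\setminus\{e\}$ and $Z^-\subseteq (X^-\cup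 Y^-)\setminus\{e\}$. The covectors of $\mathcal{M}$ are $\mathbf{0}$ together with all compositions $X^1\circ\cdots\circ X^k$ ($k\ge 1$) of cocircuits, partially ordered componentwise by $0<+$ and $0<-$ ($+,-$ incomparable). The rank $r$ of $\mathcal{M}$ is the largest $k$ such that there is a chain $\mathbf{0}=V_0<V_1<\cdots<V_k$ of covectors; the corank is $|E|-r$. $\mathcal{M}$ is uniform if $|X^0|=r-1$ for every cocircuit $X$. The cocircuit graph $G^*(\mathcal{M})$ has the cocircuits as vertices, with distinct cocircuits $X,Y$ adjacent iff $|X^0\cap Y^0|\ge r-2$ and $S(X,Y)=\emptyset$. $\operatorname{diam}(G^*(\mathcal{M}))$ is the maximum graph distance between two cocircuits. *)

theory Defs
  imports Main "HOL-Library.Extended_Nat"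
begin

datatype sign = Pos | Neg | Zero

type_synonym 'a signvec = "'a \<Rightarrow> sign"

definition signvecs :: "'a set \<Rightarrow> 'a signvec set" where
  "signvecs E = {X. \<forall>e. e \<notin> E \<longrightarrow> X e = Zero}"

definition zerovec :: "'a signvec" where
  "zerovec = (\<lambda>e. Zero)"

fun neg_sign :: "sign \<Rightarrow> sign" where
  "neg_sign Pos = Neg" | "neg_sign Neg = Pos" | "neg_sign Zero = Zero"

definition negv :: "'a signvec \<Rightarrow> 'a signvec" where
  "negv X = (\<lambda>e. neg_sign (X e))"

definition pos_part :: "'a signvec \<Rightarrow> 'a set" where
  "pos_part X = {e. X e = Pos}"

definition neg_part :: "'a signvec \<Rightarrow> 'a set" where
  "neg_part X = {e. X e = Neg}"

definition zero_part :: "'a set \<Rightarrow> 'a signvec \<Rightarrow> 'a set" where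
  "zero_part E X = {e \<in> E. X e = Zero}"

definition supp :: "'a signvec \<Rightarrow> 'a set" where
  "supp X = pos_part X \<union> neg_part X"

definition sep :: "'a signvec \<Rightarrow> 'a signvec \<Rightarrow> 'a set" where
  "sep X Y = (pos_part X \<inter> neg_part Y) \<union> (neg_part X \<inter> pos_part Y)"

definition comp :: "'a signvec \<Rightarrow> 'a signvec \<Rightarrow> 'a signvec" where
  "comp X Y = (\<lambda>e. if X e \<noteq> Zero then X e else Y e)"

text \<open>Cocircuit axioms (CC0)-(CC3) on ground set E.\<close>
definition oriented_matroid :: "'a set \<Rightarrow> 'a signvec set \<Rightarrow> bool" where
  "oriented_matroid E C \<longleftrightarrow>
     finite E \<and> C \<subseteq> signvecs E \<and>
     zerovec \<notin> C \<and>
     (\<forall>X\<in>C. negv X \<in> C) \<and>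
     (\<forall>X\<in>C. \<forall>Y\<in>C. supp X \<subseteq> supp Y \<longrightarrow> X = Y \<or> X = negv Y) \<and>
     (\<forall>X\<in>C. \<forall>Y\<in>C. \<forall>e. X \<noteq> negv Y \<and> e \<in> sep X Y \<longrightarrow>
        (\<exists>Z\<in>C. pos_part Z \<subseteq> (pos_part X \<union> pos_part Y) - {e} \<and>
                neg_part Z \<subseteq> (neg_part X \<union> neg_part Y) - {e}))"

definition covectors :: "'a signvec set \<Rightarrow> 'a signvec set" where
  "covectors C = insert zerovec
     {foldr comp Xs zerovec | Xs. Xs \<noteq> [] \<and> set Xs \<subseteq> C}"

definition sv_le :: "'a signvec \<Rightarrow> 'a signvec \<Rightarrow> bool" where
  "sv_le X Y \<longleftrightarrow> (\<forall>e. X e = Zero \<or> X e = Y e)"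

definition sv_less :: "'a signvec \<Rightarrow> 'a signvec \<Rightarrow> bool" where
  "sv_less X Y \<longleftrightarrow> sv_le X Y \<and> X \<noteq> Y"

definition om_rank :: "'a signvec set \<Rightarrow> nat" where
  "om_rank C = (GREATEST k. \<exists>V :: nat \<Rightarrow> 'a signvec.
      V 0 = zerovec \<and> (\<forall>i\<le>k. V i \<in> covectors C) \<and>
      (\<forall>i<k. sv_less (V i) (V (Suc i))))"

definition uniform_om :: "'a set \<Rightarrow> 'a signvec set \<Rightarrow> bool" where
  "uniform_om E C \<longleftrightarrow> (\<forall>X\<in>C. card (zero_part E X) = om_rank C - 1)"

definition cg_adj :: "'a set \<Rightarrow> 'a signvec set \<Rightarrow> 'a signvec \<Rightarrow> 'a signvec \<Rightarrow> bool" where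
  "cg_adj E C X Y \<longleftrightarrow> X \<in> C \<and> Y \<in> C \<and> X \<noteq> Y \<and>
     card (zero_part E X \<inter> zero_part E Y) \<ge> om_rank C - 2 \<and> sep X Y = {}"

definition cg_walk :: "'a set \<Rightarrow> 'a signvec set \<Rightarrow> nat \<Rightarrow> 'a signvec \<Rightarrow> 'a signvec \<Rightarrow> bool" where
  "cg_walk E C n X Y \<longleftrightarrow> (\<exists>p :: nat \<Rightarrow> 'a signvec.
      p 0 = X \<and> p n = Y \<and> (\<forall>i\<le>n. p i \<in> C) \<and> (\<forall>i<n. cg_adj E C (p i) (p (Suc i))))"

text \<open>Graph distance (infinity if no walk exists) and diameter, valued in enat.\<close>
definition cg_dist :: "'a set \<Rightarrow> 'a signvec set \<Rightarrow> 'a signvec \<Rightarrow> 'a signvec \<Rightarrow> enat" where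
  "cg_dist E C X Y = (INF n \<in> {n. cg_walk E C n X Y}. enat n)"

definition cg_diam :: "'a set \<Rightarrow> 'a signvec set \<Rightarrow> enat" where
  "cg_diam E C = (SUP X \<in> C. SUP Y \<in> C. cg_dist E C X Y)"

end

theory Submission
  imports Defs
begin


definition ctr :: "'a signvec set \<Rightarrow> 'a \<Rightarrow> 'a signvec set" where
  "ctr C e = {X\<in>C. X e = Zero}"

definition is_chain :: "'a signvec set \<Rightarrow> nat \<Rightarrow> (nat \<Rightarrow> 'a signvec) \<Rightarrow> bool" where
  "is_chain C k V \<longleftrightarrow> V 0 = zerovec \<and> (\<forall>i\<le>k. V i \<in> covectors C) \<and>
      (\<forall>i<k. sv_less (V i) (V (Suc i)))"

lemma om_rank_chain: "om_rank C = (GREATEST k. \<exists>V. is_chain C k V)"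
  unfolding om_rank_def is_chain_def by simp

lemma supp_iff: "x \<in> supp X \<longleftrightarrow> X x \<noteq> Zero"
  by (cases "X x") (auto simp: supp_def pos_part_def neg_part_def)

lemma comp_zero_left[simp]: "comp zerovec Y = Y"
  by (auto simp: comp_def zerovec_def)

lemma comp_assoc: "comp (comp X Y) Z = comp X (comp Y Z)"
  by (rule ext) (simp add: comp_def)

lemma comp_zero_right[simp]: "comp X zerovec = X"
  by (rule ext) (simp add: comp_def zerovec_def)

lemma foldr_comp: "foldr comp Xs Y = comp (foldr comp Xs zerovec) Y"
proof (induction Xs)
  case Nil then show ?case by simp
next
  case (Cons X Xs) then show ?case by (simp add: comp_assoc)
qed

lemma foldr_zero_mem: "X \<in> set Xs \<Longrightarrow> foldr comp Xs zerovec x = Zero \<Longrightarrow> X x = Zero"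
proof (induction Xs)
  case Nil then show ?case by simp
next
  case (Cons Y Xs) then show ?case by (cases "Y x = Zero") (auto simp: comp_def)
qed

lemma foldr_nonzero: "foldr comp Xs zerovec x \<noteq> Zero \<Longrightarrow> \<exists>X\<in>set Xs. X x \<noteq> Zero"
proof (induction Xs)
  case Nil then show ?case by (simp add: zerovec_def)
next
  case (Cons Y Xs) then show ?case by (cases "Y x = Zero") (auto simp: comp_def)
qed

lemma zero_in_cov: "zerovec \<in> covectors C"
  by (simp add: covectors_def)

lemma cov_comp: assumes "V \<in> covectors C" "X \<in> C" shows "comp V X \<in> covectors C"
proof (cases "V = zerovec")
  case True
  then show ?thesis using assms by (auto simp: covectors_def intro!: exI[of _ "[X]"] ext simp: comp_def zerovec_def)
next
  case False
  then obtain Xs where Xs: "V = foldr comp Xs zerovec" "Xs \<noteq> []" "set Xs \<subseteq> C"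
    using assms(1) by (auto simp: covectors_def)
  have a: "foldr comp (Xs @ [X]) zerovec = foldr comp Xs X"
    by simp
  have "comp V X = foldr comp (Xs @ [X]) zerovec"
    unfolding a Xs(1) by (rule foldr_comp[symmetric])
  moreover have "Xs @ [X] \<noteq> [] \<and> set (Xs@[X]) \<subseteq> C" using Xs assms by auto
  ultimately have "\<exists>Ys. comp V X = foldr comp Ys zerovec \<and> Ys \<noteq> [] \<and> set Ys \<subseteq> C" by blast
  then show ?thesis unfolding covectors_def by simp
qed

lemma cov_signvecs: assumes "C \<subseteq> signvecs E" "V \<in> covectors C" shows "V \<in> signvecs E"
proof -
  have "set Xs \<subseteq> C \<Longrightarrow> foldr comp Xs zerovec \<in> signvecs E" for Xs
    using assms(1) by (induction Xs) (auto simp: signvecs_def zerovec_def comp_def)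
  then show ?thesis using assms(2) by (auto simp: covectors_def signvecs_def zerovec_def)
qed

lemma cov_nonzero_head: assumes "V \<in> covectors C" "V \<noteq> zerovec"
  shows "\<exists>X\<in>C. \<forall>x. V x = Zero \<longrightarrow> X x = Zero"
proof -
  obtain Xs where Xs: "V = foldr comp Xs zerovec" "Xs \<noteq> []" "set Xs \<subseteq> C"
    using assms by (auto simp: covectors_def)
  then obtain X Ys where "Xs = X # Ys" by (cases Xs) auto
  then show ?thesis using Xs foldr_zero_mem[of X Xs] by auto
qed

lemma cov_nonzero_at: assumes "V \<in> covectors C" "V x \<noteq> Zero"
  shows "\<exists>X\<in>C. X x \<noteq> Zero"
proof -
  have "V \<noteq> zerovec" using assms(2) by (auto simp: zerovec_def)
  then obtain Xs where Xs: "V = foldr comp Xs zerovec" "set Xs \<subseteq> C"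
    using assms(1) by (auto simp: covectors_def)
  then obtain X where "X \<in> set Xs" "X x \<noteq> Zero" using foldr_nonzero[of Xs x] assms(2) by auto
  then show ?thesis using Xs(2) by blast
qed

lemma cov_ctr: assumes "V \<in> covectors C" "V e = Zero" shows "V \<in> covectors (ctr C e)"
proof (cases "V = zerovec")
  case True then show ?thesis by (simp add: zero_in_cov)
next
  case False
  then obtain Xs where Xs: "V = foldr comp Xs zerovec" "Xs \<noteq> []" "set Xs \<subseteq> C"
    using assms(1) by (auto simp: covectors_def)
  have "set Xs \<subseteq> ctr C e" using Xs assms(2) foldr_zero_mem[of _ Xs e] by (auto simp: ctr_def)
  then have "\<exists>Ys. V = foldr comp Ys zerovec \<and> Ys \<noteq> [] \<and> set Ys \<subseteq> ctr C e" using Xs by blast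
  then show ?thesis unfolding covectors_def by simp
qed

lemma cov_ctr_zero: assumes "V \<in> covectors (ctr C e)" shows "V e = Zero"
proof -
  have "set Xs \<subseteq> ctr C e \<Longrightarrow> foldr comp Xs zerovec e = Zero" for Xs
    by (induction Xs) (auto simp: ctr_def comp_def zerovec_def)
  then show ?thesis using assms by (auto simp: covectors_def zerovec_def)
qed

lemma cov_mono: "C \<subseteq> D \<Longrightarrow> covectors C \<subseteq> covectors D"
  unfolding covectors_def by auto

lemma zero_part_strict:
  assumes "V \<in> signvecs E" "W \<in> signvecs E" "sv_less V W"
  shows "zero_part E W \<subset> zero_part E V"
proof -
  have le: "\<forall>e. V e = Zero \<or> V e = W e" and ne: "V \<noteq> W" using assms(3) by (auto simp: sv_less_def sv_le_def)
  obtain x where x: "V x \<noteq> W x" using ne by auto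
  then have "V x = Zero" "W x \<noteq> Zero" using le by metis+
  then have "x \<in> E" using assms(2) by (auto simp: signvecs_def)
  then show ?thesis using le \<open>V x = Zero\<close> \<open>W x \<noteq> Zero\<close> by (auto simp: zero_part_def)
qed

lemma chain_bound_gen:
  assumes "finite E" "C \<subseteq> signvecs E" "is_chain C m V"
  shows "i \<le> m \<Longrightarrow> card (zero_part E (V i)) + i \<le> card E"
proof (induction i)
  case 0 then show ?case using assms(1) by (auto simp: zero_part_def intro: card_mono)
next
  case (Suc i)
  have "V i \<in> signvecs E" "V (Suc i) \<in> signvecs E" using assms Suc.prems
    by (auto simp: is_chain_def intro: cov_signvecs)
  moreover have "sv_less (V i) (V (Suc i))" using assms(3) Suc.prems by (auto simp: is_chain_def)
  ultimately have "zero_part E (V (Suc i)) \<subset> zero_part E (V i)" by (rule zero_part_strict)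
  then have "card (zero_part E (V (Suc i))) < card (zero_part E (V i))"
    using assms(1) by (intro psubset_card_mono) (auto simp: zero_part_def)
  then show ?case using Suc by auto
qed

lemma chain_bound_unif:
  assumes "finite E" "C \<subseteq> signvecs E" "is_chain C m V" "\<forall>X\<in>C. card (zero_part E X) = s"
  shows "1 \<le> i \<Longrightarrow> i \<le> m \<Longrightarrow> card (zero_part E (V i)) + i \<le> s + 1"
proof (induction i)
  case 0 then show ?case by simp
next
  case (Suc i)
  show ?case
  proof (cases i)
    case 0
    have "sv_less (V 0) (V 1)" using assms(3) Suc.prems by (auto simp: is_chain_def)
    then have "V 1 \<noteq> zerovec" using assms(3) by (auto simp: is_chain_def sv_less_def)
    moreover have "V 1 \<in> covectors C" using assms(3) Suc.prems by (auto simp: is_chain_def)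
    ultimately obtain X where X: "X \<in> C" "\<forall>x. V 1 x = Zero \<longrightarrow> X x = Zero"
      using cov_nonzero_head by blast
    have "zero_part E (V 1) \<subseteq> zero_part E X" using X by (auto simp: zero_part_def)
    then have "card (zero_part E (V 1)) \<le> s" using assms(1,4) X(1)
      by (metis card_mono finite_subset mem_Collect_eq subsetI zero_part_def)
    then show ?thesis using 0 by simp
  next
    case (Suc j)
    have "V i \<in> signvecs E" "V (Suc i) \<in> signvecs E" using assms Suc.prems
      by (auto simp: is_chain_def intro: cov_signvecs)
    moreover have "sv_less (V i) (V (Suc i))" using assms(3) Suc.prems by (auto simp: is_chain_def)
    ultimately have "zero_part E (V (Suc i)) \<subset> zero_part E (V i)" by (rule zero_part_strict)
    then have "card (zero_part E (V (Suc i))) < card (zero_part E (V i))"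
      using assms(1) by (intro psubset_card_mono) (auto simp: zero_part_def)
    then show ?thesis using Suc.IH Suc.prems \<open>i = Suc j\<close> by auto
  qed
qed

lemma chain_len_unif:
  assumes "finite E" "C \<subseteq> signvecs E" "is_chain C m V" "\<forall>X\<in>C. card (zero_part E X) = s"
  shows "m \<le> s + 1"
  using chain_bound_unif[OF assms, of m] by (cases m) auto

lemma chain0: "is_chain C 0 (\<lambda>_. zerovec)"
  by (simp add: is_chain_def zero_in_cov)

lemma om_rank_props:
  assumes "finite E" "C \<subseteq> signvecs E"
  shows "\<exists>V. is_chain C (om_rank C) V" "is_chain C m V \<Longrightarrow> m \<le> om_rank C"
proof -
  have b: "\<And>y. (\<exists>V. is_chain C y V) \<Longrightarrow> y \<le> card E"
    using chain_bound_gen[OF assms] by fastforce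
  show "\<exists>V. is_chain C (om_rank C) V" unfolding om_rank_chain
    by (rule GreatestI_nat[OF _ b]) (use chain0 in blast)
  show "is_chain C m V \<Longrightarrow> m \<le> om_rank C" unfolding om_rank_chain
    by (rule Greatest_le_nat[OF _ b]) blast+
qed

lemma om_rank_eq:
  assumes "is_chain C m V" "\<And>m' V'. is_chain C m' V' \<Longrightarrow> m' \<le> m"
  shows "om_rank C = m"
  unfolding om_rank_chain by (rule Greatest_equality) (use assms in blast)+

lemma om_facts:
  assumes "oriented_matroid E C"
  shows "finite E" "C \<subseteq> signvecs E" "zerovec \<notin> C" "\<And>X. X\<in>C \<Longrightarrow> negv X \<in> C"
    "\<And>X Y. X\<in>C \<Longrightarrow> Y\<in>C \<Longrightarrow> supp X \<subseteq> supp Y \<Longrightarrow> X = Y \<or> X = negv Y"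
    "\<And>X Y e. X\<in>C \<Longrightarrow> Y\<in>C \<Longrightarrow> X \<noteq> negv Y \<Longrightarrow> e \<in> sep X Y \<Longrightarrow>
        (\<exists>Z\<in>C. pos_part Z \<subseteq> (pos_part X \<union> pos_part Y) - {e} \<and>
                neg_part Z \<subseteq> (neg_part X \<union> neg_part Y) - {e})"
  using assms unfolding oriented_matroid_def by blast+



lemma zero_part_iff: "x \<in> zero_part E X \<longleftrightarrow> x \<in> E \<and> X x = Zero"
  by (simp add: zero_part_def)

lemma negv_negv[simp]: "negv (negv X) = X"
proof (rule ext)
  fix x show "negv (negv X) x = X x" by (cases "X x") (auto simp: negv_def)
qed

lemma negv_zero_iff[simp]: "negv X x = Zero \<longleftrightarrow> X x = Zero"
  by (cases "X x") (auto simp: negv_def)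

lemma zero_part_negv[simp]: "zero_part E (negv X) = zero_part E X"
  by (auto simp: zero_part_def)

lemma sign_cases3: "s \<noteq> Pos \<Longrightarrow> s \<noteq> Neg \<Longrightarrow> s = Zero"
  by (cases s) auto

lemma zero_part_finite: "finite E \<Longrightarrow> finite (zero_part E X)"
  by (simp add: zero_part_def)

lemma zero_part_ctr:
  assumes "X e = Zero" "e \<in> E" "finite E"
  shows "zero_part (E - {e}) X = zero_part E X - {e}"
    "card (zero_part (E - {e}) X) = card (zero_part E X) - 1"
proof -
  show a: "zero_part (E - {e}) X = zero_part E X - {e}" by (auto simp: zero_part_def)
  have "e \<in> zero_part E X" using assms by (simp add: zero_part_def)
  then show "card (zero_part (E - {e}) X) = card (zero_part E X) - 1"
    unfolding a using assms(3) by (simp add: zero_part_finite)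
qed

lemma ctr_om:
  assumes "oriented_matroid E C"
  shows "oriented_matroid (E - {e}) (ctr C e)"
proof -
  note f = om_facts[OF assms]
  have 1: "finite (E - {e})" using f(1) by simp
  have 2: "ctr C e \<subseteq> signvecs (E - {e})" using f(2) by (auto simp: ctr_def signvecs_def)
  have 3: "zerovec \<notin> ctr C e" using f(3) by (auto simp: ctr_def)
  have 4: "\<forall>X\<in>ctr C e. negv X \<in> ctr C e" using f(4) by (auto simp: ctr_def)
  have 5: "\<forall>X\<in>ctr C e. \<forall>Y\<in>ctr C e. supp X \<subseteq> supp Y \<longrightarrow> X = Y \<or> X = negv Y"
    using f(5) by (auto simp: ctr_def)
  have 6: "\<forall>X\<in>ctr C e. \<forall>Y\<in>ctr C e. \<forall>e'. X \<noteq> negv Y \<and> e' \<in> sep X Y \<longrightarrow>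
        (\<exists>Z\<in>ctr C e. pos_part Z \<subseteq> (pos_part X \<union> pos_part Y) - {e'} \<and>
                neg_part Z \<subseteq> (neg_part X \<union> neg_part Y) - {e'})"
  proof (intro ballI allI impI)
    fix X Y e' assume X: "X \<in> ctr C e" and Y: "Y \<in> ctr C e" and h: "X \<noteq> negv Y \<and> e' \<in> sep X Y"
    obtain Z where Z: "Z \<in> C" "pos_part Z \<subseteq> (pos_part X \<union> pos_part Y) - {e'}"
      "neg_part Z \<subseteq> (neg_part X \<union> neg_part Y) - {e'}"
      using f(6)[of X Y e'] X Y h by (auto simp: ctr_def)
    have "X e = Zero" "Y e = Zero" using X Y by (auto simp: ctr_def)
    then have "Z e \<noteq> Pos" "Z e \<noteq> Neg" using Z(2,3) by (auto simp: pos_part_def neg_part_def)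
    then have "Z e = Zero" by (rule sign_cases3)
    then show "\<exists>Z\<in>ctr C e. pos_part Z \<subseteq> (pos_part X \<union> pos_part Y) - {e'} \<and>
                neg_part Z \<subseteq> (neg_part X \<union> neg_part Y) - {e'}"
      using Z by (auto simp: ctr_def)
  qed
  show ?thesis unfolding oriented_matroid_def using 1 2 3 4 5 6 by blast
qed

lemma elim_tight:
  assumes om: "oriented_matroid E C" and u: "\<forall>X\<in>C. card (zero_part E X) = s"
    and X1: "X1 \<in> C" and X2: "X2 \<in> C"
    and c: "card (zero_part E X1 \<inter> zero_part E X2) + 1 = s"
    and fE: "f \<in> E" and f1: "X1 f \<noteq> Zero" and f2: "X2 f \<noteq> Zero"
  shows "\<exists>Z\<in>C. zero_part E Z = insert f (zero_part E X1 \<inter> zero_part E X2)"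
proof -
  note F = om_facts[OF om]
  define Y where "Y = (if X2 f = X1 f then negv X2 else X2)"
  have Y: "Y \<in> C" using F(4) X2 by (simp add: Y_def)
  have zY: "Y x = Zero \<longleftrightarrow> X2 x = Zero" for x by (simp add: Y_def)
  have sepf: "f \<in> sep X1 Y"
    using f1 f2 by (cases "X1 f"; cases "X2 f") (auto simp: Y_def sep_def pos_part_def neg_part_def negv_def)
  have "X1 \<noteq> negv Y"
  proof
    assume "X1 = negv Y"
    then have "zero_part E X1 = zero_part E X2" by (auto simp: zero_part_def zY)
    moreover have "card (zero_part E X1) = s" using u X1 by blast
    ultimately show False using c by simp
  qed
  then obtain Z where Z: "Z \<in> C" "pos_part Z \<subseteq> (pos_part X1 \<union> pos_part Y) - {f}"
      "neg_part Z \<subseteq> (neg_part X1 \<union> neg_part Y) - {f}"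
    using F(6)[OF X1 Y _ sepf] by blast
  let ?K = "zero_part E X1 \<inter> zero_part E X2"
  have sub: "insert f ?K \<subseteq> zero_part E Z"
  proof
    fix x assume x: "x \<in> insert f ?K"
    show "x \<in> zero_part E Z"
    proof (cases "x = f")
      case True
      then have "Z x \<noteq> Pos" "Z x \<noteq> Neg" using Z(2,3) by (auto simp: pos_part_def neg_part_def)
      then show ?thesis using True fE sign_cases3 by (auto simp: zero_part_def)
    next
      case False
      then have "x \<in> E" "X1 x = Zero" "Y x = Zero" using x by (auto simp: zero_part_def zY)
      then have "Z x \<noteq> Pos" "Z x \<noteq> Neg" using Z(2,3) by (auto simp: pos_part_def neg_part_def)
      then show ?thesis using \<open>x \<in> E\<close> sign_cases3 by (auto simp: zero_part_def)
    qed
  qed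
  have fin: "finite (zero_part E Z)" using F(1) by (simp add: zero_part_finite)
  have "f \<notin> ?K" using f1 by (auto simp: zero_part_def)
  then have "card (insert f ?K) = s" using c F(1) by (simp add: zero_part_finite)
  moreover have "card (zero_part E Z) = s" using u Z(1) by blast
  ultimately have "insert f ?K = zero_part E Z" using card_subset_eq[OF fin sub] by simp
  then show ?thesis using Z(1) by metis
qed

lemma chain_zero_mono:
  assumes "is_chain C m V" "j \<le> m" "V j x = Zero"
  shows "i \<le> j \<Longrightarrow> V i x = Zero"
  using assms(2,3)
proof (induction j)
  case 0 then show ?case by simp
next
  case (Suc j)
  show ?case
  proof (cases "i = Suc j")
    case True then show ?thesis using Suc by simp
  next
    case False
    have "sv_less (V j) (V (Suc j))" using assms(1) Suc.prems by (auto simp: is_chain_def)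
    then have "V j x = Zero" using Suc.prems(3) by (auto simp: sv_less_def sv_le_def)
    then show ?thesis using Suc False by simp
  qed
qed

lemma chain_ctr:
  assumes "is_chain C m V" "V m e = Zero"
  shows "is_chain (ctr C e) m V"
  using assms chain_zero_mono[OF assms(1) order_refl assms(2)]
  unfolding is_chain_def by (auto intro!: cov_ctr)

lemma ext_card:
  assumes "finite S" "P \<subseteq> S" "card P \<le> t" "t \<le> card S"
  shows "\<exists>H. P \<subseteq> H \<and> H \<subseteq> S \<and> card H = t"
proof -
  have "card (S - P) = card S - card P" using assms by (simp add: card_Diff_subset finite_subset)
  then have "t - card P \<le> card (S - P)" using assms by simp
  then obtain B where B: "B \<subseteq> S - P" "card B = t - card P" "finite B"
    by (rule obtain_subset_with_card_n)
  have "card (P \<union> B) = card P + card B"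
    using B assms by (intro card_Un_disjoint) (auto intro: finite_subset)
  then show ?thesis using B assms by (intro exI[of _ "P \<union> B"]) auto
qed



lemma chain_trunc: "is_chain C m V \<Longrightarrow> j \<le> m \<Longrightarrow> is_chain C j V"
  unfolding is_chain_def by (meson le_trans less_le_trans)

lemma hyper:
  assumes "oriented_matroid E C" "\<forall>X\<in>C. card (zero_part E X) = s" "is_chain C (Suc s) V"
    "H \<subseteq> E" "card H = s"
  shows "\<exists>X\<in>C. zero_part E X = H"
  using assms
proof (induction s arbitrary: E C V H)
  case 0
  note F = om_facts[OF "0.prems"(1)]
  have "sv_less (V 0) (V 1)" "V 1 \<in> covectors C" "V 0 = zerovec" using "0.prems"(3) by (auto simp: is_chain_def)
  then have "V 1 \<noteq> zerovec" "V 1 \<in> covectors C" by (auto simp: sv_less_def)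
  then obtain X where X: "X \<in> C" using cov_nonzero_head[of "V 1" C] by auto
  have "zero_part E X = {}" using "0.prems"(2) X F(1) by (simp add: zero_part_finite)
  moreover have "H = {}" using "0.prems"(4,5) F(1) finite_subset by fastforce
  ultimately show ?case using X by blast
next
  case (Suc s)
  note SP = Suc.prems
  note F = om_facts[OF Suc.prems(1)]
  have ch: "is_chain C (Suc (Suc s)) V" by fact
  have b2: "card (zero_part E (V (Suc (Suc s)))) + Suc (Suc s) \<le> Suc s + 1"
    using chain_bound_unif[OF F(1) F(2) ch Suc.prems(2), of "Suc (Suc s)"] by simp
  have b1: "card (zero_part E (V (Suc s))) + Suc s \<le> Suc s + 1"
    using chain_bound_unif[OF F(1) F(2) ch Suc.prems(2), of "Suc s"] by simp
  have vs: "V (Suc s) \<in> signvecs E" "V (Suc (Suc s)) \<in> signvecs E"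
    using ch F(2) by (auto simp: is_chain_def intro: cov_signvecs)
  have "sv_less (V (Suc s)) (V (Suc (Suc s)))" using ch by (auto simp: is_chain_def)
  then have ps: "zero_part E (V (Suc (Suc s))) \<subset> zero_part E (V (Suc s))"
    using zero_part_strict vs by blast
  have z2: "zero_part E (V (Suc (Suc s))) = {}" using b2 F(1) by (simp add: zero_part_finite)
  then have "zero_part E (V (Suc s)) \<noteq> {}" using ps by auto
  moreover have "card (zero_part E (V (Suc s))) \<le> 1" using b1 by simp
  ultimately obtain g where g: "zero_part E (V (Suc s)) = {g}"
    using F(1) zero_part_finite[of E]
    by (metis card_1_singletonE card_0_eq le_neq_implies_less less_one)
  then have gE: "g \<in> E" and Vg: "V (Suc s) g = Zero" by (auto simp: zero_part_def)
  have "V (Suc (Suc s)) g \<noteq> Zero" using z2 gE by (auto simp: zero_part_def)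
  moreover have "V (Suc (Suc s)) \<in> covectors C" using ch by (auto simp: is_chain_def)
  ultimately obtain X0 where X0: "X0 \<in> C" "X0 g \<noteq> Zero" using cov_nonzero_at[of "V (Suc (Suc s))" C g] by auto
  define Hs where "Hs = zero_part E X0"
  have gHs: "g \<notin> Hs" using X0 by (simp add: Hs_def zero_part_def)
  have Hs_card: "card Hs = Suc s" using Suc.prems(2) X0 by (simp add: Hs_def)
  have Hs_E: "Hs \<subseteq> E" by (auto simp: Hs_def zero_part_def)
  have omc: "oriented_matroid (E - {g}) (ctr C g)" by (rule ctr_om[OF Suc.prems(1)])
  have uc: "\<forall>X\<in>ctr C g. card (zero_part (E - {g}) X) = s"
  proof
    fix X assume "X \<in> ctr C g"
    then have "X \<in> C" "X g = Zero" by (auto simp: ctr_def)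
    then show "card (zero_part (E - {g}) X) = s"
      using zero_part_ctr(2)[OF _ gE F(1)] Suc.prems(2) by simp
  qed
  have chc: "is_chain (ctr C g) (Suc s) V"
  proof -
    have "is_chain C (Suc s) V" using chain_trunc[OF ch, of "Suc s"] by simp
    then show ?thesis using chain_ctr[of C "Suc s" V g] Vg by simp
  qed
  have withg: "\<exists>X\<in>C. zero_part E X = H" if H: "H \<subseteq> E" "card H = Suc s" "g \<in> H" for H
  proof -
    have "H - {g} \<subseteq> E - {g}" "card (H - {g}) = s" using H by auto
    then obtain X where X: "X \<in> ctr C g" "zero_part (E - {g}) X = H - {g}"
      using Suc.IH[OF omc uc chc] by blast
    then have "X \<in> C" "X g = Zero" by (auto simp: ctr_def)
    then have "zero_part E X = insert g (zero_part (E - {g}) X)"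
      using gE by (auto simp: zero_part_def)
    then show ?thesis using X H(3) \<open>X \<in> C\<close> by auto
  qed
  have main: "\<forall>H. H \<subseteq> E \<and> card H = Suc s \<and> g \<notin> H \<and> card (H - Hs) = d \<longrightarrow> (\<exists>X\<in>C. zero_part E X = H)" for d
  proof (induction d)
    case 0
    show ?case
    proof (intro allI impI)
      fix H assume H: "H \<subseteq> E \<and> card H = Suc s \<and> g \<notin> H \<and> card (H - Hs) = 0"
      have fH: "finite H" "finite Hs" using H Hs_E F(1) finite_subset by auto
      then have "H \<subseteq> Hs" using H by auto
      then have "H = Hs" using card_subset_eq[OF fH(2)] H Hs_card by simp
      then show "\<exists>X\<in>C. zero_part E X = H" using X0 Hs_def by blast
    qed
  next
    case (Suc d)
    show ?case
    proof (intro allI impI)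
      fix H assume H: "H \<subseteq> E \<and> card H = Suc s \<and> g \<notin> H \<and> card (H - Hs) = Suc d"
      have fH: "finite H" "finite Hs" using H Hs_E F(1) finite_subset by auto
      obtain h where h: "h \<in> H" "h \<notin> Hs" using H by (metis Diff_iff card_0_eq fH(1) finite_Diff nat.distinct(1) subsetI subset_empty)
      have "\<not> Hs \<subseteq> H"
      proof
        assume "Hs \<subseteq> H"
        then have "Hs = H" using card_subset_eq[OF fH(1)] H Hs_card by simp
        then show False using h by simp
      qed
      then obtain h' where h': "h' \<in> Hs" "h' \<notin> H" by blast
      define H' where "H' = insert h' (H - {h})"
      have hh: "h \<noteq> h'" "h' \<noteq> g" using h h' gHs by auto
      have H'1: "H' \<subseteq> E" using H h' Hs_E by (auto simp: H'_def)
      have H'2: "card H' = Suc s" using H h h' fH by (simp add: H'_def)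
      have H'3: "g \<notin> H'" using H hh by (auto simp: H'_def)
      have "H' - Hs = (H - Hs) - {h}" using h h' by (auto simp: H'_def)
      then have H'4: "card (H' - Hs) = d" using H h fH by simp
      obtain X1 where X1: "X1 \<in> C" "zero_part E X1 = H'"
        using Suc.IH H'1 H'2 H'3 H'4 by blast
      define K where "K = H - {h}"
      have gK: "g \<notin> K" using H by (simp add: K_def)
      have cK: "card K = s" using H h fH by (simp add: K_def)
      have "insert g K \<subseteq> E" "card (insert g K) = Suc s"
        using H gE gK cK fH by (auto simp: K_def)
      then obtain X2 where X2: "X2 \<in> C" "zero_part E X2 = insert g K"
        using withg by blast
      have int: "zero_part E X1 \<inter> zero_part E X2 = K"
        using X1(2) X2(2) H'3 h' hh by (auto simp: H'_def K_def)
      have hE: "h \<in> E" using H h by auto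
      have "h \<notin> zero_part E X1" using X1(2) hh by (auto simp: H'_def)
      then have h1: "X1 h \<noteq> Zero" using hE by (simp add: zero_part_def)
      have "h \<notin> zero_part E X2" using X2(2) H h by (auto simp: K_def)
      then have h2: "X2 h \<noteq> Zero" using hE by (simp add: zero_part_def)
      obtain Z where "Z \<in> C" "zero_part E Z = insert h K"
        using elim_tight[OF SP(1,2) X1(1) X2(1) _ hE h1 h2] int cK by auto
      moreover have "insert h K = H" using h by (auto simp: K_def)
      ultimately show "\<exists>X\<in>C. zero_part E X = H" by auto
    qed
  qed
  show ?case
  proof (cases "g \<in> H")
    case True then show ?thesis using withg Suc.prems by blast
  next
    case False then show ?thesis using main Suc.prems by blast
  qed
qed



lemma ctr_rank:
  assumes om: "oriented_matroid E C" and u: "\<forall>X\<in>C. card (zero_part E X) = s"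
    and ch: "is_chain C (Suc s) V" and eE: "e \<in> E" and s1: "1 \<le> s"
  shows "\<forall>X\<in>ctr C e. card (zero_part (E-{e}) X) = s - 1" "om_rank (ctr C e) = s"
proof -
  note F = om_facts[OF om]
  show u': "\<forall>X\<in>ctr C e. card (zero_part (E-{e}) X) = s - 1"
  proof
    fix X assume "X \<in> ctr C e"
    then have "X \<in> C" "X e = Zero" by (auto simp: ctr_def)
    then show "card (zero_part (E - {e}) X) = s - 1"
      using zero_part_ctr(2)[OF _ eE F(1)] u by simp
  qed
  have cardE: "Suc s \<le> card E"
    using chain_bound_gen[OF F(1) F(2) ch, of "Suc s"] by simp
  have claim: "m \<le> s \<longrightarrow> (\<exists>W. is_chain (ctr C e) m W \<and> s + 1 \<le> card (zero_part E (W m)) + m)" for m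
  proof (induction m)
    case 0
    have "zero_part E zerovec = E" by (auto simp: zero_part_def zerovec_def)
    then show ?case using chain0[of "ctr C e"] cardE by (intro impI exI[of _ "\<lambda>_. zerovec"]) simp
  next
    case (Suc m)
    show ?case
    proof
      assume sm: "Suc m \<le> s"
      then obtain W where W: "is_chain (ctr C e) m W" "s + 1 \<le> card (zero_part E (W m)) + m"
        using Suc.IH by auto
      define Q0 where "Q0 = zero_part E (W m)"
      have Wm: "W m \<in> covectors (ctr C e)" using W(1) by (auto simp: is_chain_def)
      then have "W m e = Zero" by (rule cov_ctr_zero)
      then have eQ0: "e \<in> Q0" using eE by (simp add: Q0_def zero_part_def)
      have fQ0: "finite Q0" using F(1) by (simp add: Q0_def zero_part_finite)
      have cQ0: "s + 1 - m \<le> card Q0" using W(2) by (simp add: Q0_def)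
      have "card (Q0 - {e}) = card Q0 - 1" using eQ0 fQ0 by simp
      then have "0 < card (Q0 - {e})" using cQ0 sm by simp
      then have "Q0 - {e} \<noteq> {}" by (metis card.empty less_irrefl)
      then obtain g where g: "g \<in> Q0" "g \<noteq> e" by blast
      define Q where "Q = Q0 - {g}"
      have fQ: "finite Q" using fQ0 by (simp add: Q_def)
      have cQ: "s - m \<le> card Q" using g fQ0 cQ0 by (simp add: Q_def)
      have eQ: "{e} \<subseteq> Q" using eQ0 g by (auto simp: Q_def)
      have c1: "card {e} \<le> s - m" using sm by simp
      obtain Q' where Q': "{e} \<subseteq> Q'" "Q' \<subseteq> Q" "card Q' = s - m"
        using ext_card[OF fQ eQ c1 cQ] by blast
      have gE: "g \<in> E" using g by (simp add: Q0_def zero_part_def)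
      have "Q' \<subseteq> E - {g}" using Q' by (auto simp: Q_def Q0_def zero_part_def)
      moreover have "s \<le> card (E - {g})" using cardE gE F(1) by simp
      ultimately obtain H where H: "Q' \<subseteq> H" "H \<subseteq> E - {g}" "card H = s"
        using ext_card[of "E - {g}" Q' s] F(1) Q'(3) by auto
      obtain Z where Z: "Z \<in> C" "zero_part E Z = H"
        using hyper[OF om u ch, of H] H by auto
      have "e \<in> H" using Q' H by auto
      then have Ze: "Z e = Zero" using Z(2) by (auto simp: zero_part_def)
      then have Zc: "Z \<in> ctr C e" using Z(1) by (simp add: ctr_def)
      have Zg: "Z g \<noteq> Zero" using Z(2) H(2) gE by (auto simp: zero_part_def)
      have Wg: "W m g = Zero" using g by (simp add: Q0_def zero_part_def)
      define W' where "W' = W(Suc m := comp (W m) Z)"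
      have sl: "sv_less (W m) (comp (W m) Z)"
      proof -
        have "sv_le (W m) (comp (W m) Z)" by (auto simp: sv_le_def comp_def)
        moreover have "comp (W m) Z g \<noteq> W m g" using Wg Zg by (simp add: comp_def)
        ultimately show ?thesis by (auto simp: sv_less_def)
      qed
      have "is_chain (ctr C e) (Suc m) W'"
        unfolding is_chain_def
      proof (intro conjI allI impI)
        show "W' 0 = zerovec" using W(1) by (simp add: W'_def is_chain_def)
      next
        fix i assume "i \<le> Suc m"
        then show "W' i \<in> covectors (ctr C e)"
          using W(1) cov_comp[OF Wm Zc] by (cases "i = Suc m") (auto simp: W'_def is_chain_def)
      next
        fix i assume i: "i < Suc m"
        show "sv_less (W' i) (W' (Suc i))"
        proof (cases "i = m")
          case True then show ?thesis using sl by (simp add: W'_def)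
        next
          case False then show ?thesis using W(1) i by (auto simp: W'_def is_chain_def)
        qed
      qed
      moreover have "Q' \<subseteq> zero_part E (W' (Suc m))"
        using Q' H Z(2) by (auto simp: W'_def Q_def Q0_def zero_part_def comp_def)
      then have "card Q' \<le> card (zero_part E (W' (Suc m)))"
        using F(1) by (intro card_mono) (auto simp: zero_part_finite)
      then have "s + 1 \<le> card (zero_part E (W' (Suc m))) + Suc m" using Q'(3) sm by simp
      ultimately show "\<exists>W. is_chain (ctr C e) (Suc m) W \<and> s + 1 \<le> card (zero_part E (W (Suc m))) + Suc m"
        by blast
    qed
  qed
  obtain W where W: "is_chain (ctr C e) s W" using claim[of s] by auto
  note F' = om_facts[OF ctr_om[OF om, of e]]
  show "om_rank (ctr C e) = s"
  proof (rule om_rank_eq[OF W])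
    fix m' V' assume "is_chain (ctr C e) m' V'"
    then show "m' \<le> s" using chain_len_unif[OF F'(1) F'(2) _ u'] s1 by fastforce
  qed
qed

lemma adj_ctr:
  assumes "cg_adj (E - {e}) (ctr C e) X Y" "om_rank (ctr C e) + 1 = om_rank C"
    "3 \<le> om_rank C" "e \<in> E" "finite E"
  shows "cg_adj E C X Y"
proof -
  have X: "X \<in> C" "X e = Zero" and Y: "Y \<in> C" "Y e = Zero" using assms(1)
    by (auto simp: cg_adj_def ctr_def)
  have eq: "zero_part E X \<inter> zero_part E Y = insert e (zero_part (E-{e}) X \<inter> zero_part (E-{e}) Y)"
    using X Y assms(4) by (auto simp: zero_part_def)
  have "card (zero_part E X \<inter> zero_part E Y) = card (zero_part (E-{e}) X \<inter> zero_part (E-{e}) Y) + 1"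
    unfolding eq using assms(5) by (simp add: zero_part_def)
  then show ?thesis using assms X Y by (auto simp: cg_adj_def)
qed

lemma dist_ctr:
  assumes "X \<in> ctr C e" "Y \<in> ctr C e" "om_rank (ctr C e) + 1 = om_rank C"
    "3 \<le> om_rank C" "e \<in> E" "finite E"
  shows "cg_dist E C X Y \<le> cg_diam (E - {e}) (ctr C e)"
proof -
  have "{n. cg_walk (E-{e}) (ctr C e) n X Y} \<subseteq> {n. cg_walk E C n X Y}"
  proof
    fix n assume "n \<in> {n. cg_walk (E-{e}) (ctr C e) n X Y}"
    then obtain p where p: "p 0 = X" "p n = Y" "\<forall>i\<le>n. p i \<in> ctr C e"
      "\<forall>i<n. cg_adj (E-{e}) (ctr C e) (p i) (p (Suc i))" by (auto simp: cg_walk_def)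
    then have "\<forall>i\<le>n. p i \<in> C" by (auto simp: ctr_def)
    moreover have "\<forall>i<n. cg_adj E C (p i) (p (Suc i))"
      using adj_ctr[OF _ assms(3-6)] p(4) by blast
    ultimately show "n \<in> {n. cg_walk E C n X Y}" using p(1,2) unfolding cg_walk_def by blast
  qed
  then have "cg_dist E C X Y \<le> cg_dist (E-{e}) (ctr C e) X Y"
    unfolding cg_dist_def by (rule INF_superset_mono) simp
  also have "\<dots> \<le> cg_diam (E - {e}) (ctr C e)"
    unfolding cg_diam_def by (rule SUP_upper2[OF assms(1)], rule SUP_upper[OF assms(2)])
  finally show ?thesis .
qed

lemma main_ind:
  fixes B :: enat
  assumes base: "\<And>(E::'a set) C r. oriented_matroid E C \<Longrightarrow> uniform_om E C \<Longrightarrow> om_rank C = r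
     \<Longrightarrow> 2 \<le> r \<Longrightarrow> r \<le> k + 2 \<Longrightarrow> card E = r + k \<Longrightarrow> cg_diam E C \<le> B"
  shows "oriented_matroid (E::'a set) C \<Longrightarrow> uniform_om E C \<Longrightarrow> om_rank C = r \<Longrightarrow> 2 \<le> r
     \<Longrightarrow> card E = r + k \<Longrightarrow> cg_diam E C \<le> B"
proof (induction r arbitrary: E C rule: less_induct)
  case (less r)
  show ?case
  proof (cases "r \<le> k + 2")
    case True then show ?thesis using base less.prems by blast
  next
    case False
    note om = less.prems(1)
    note F = om_facts[OF om]
    have u: "\<forall>X\<in>C. card (zero_part E X) = r - 1" using less.prems(2,3) by (simp add: uniform_om_def)
    obtain V where "is_chain C (om_rank C) V" using om_rank_props(1)[OF F(1) F(2)] by blast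
    then have ch: "is_chain C (Suc (r - 1)) V" using less.prems(3,4) by simp
    show ?thesis unfolding cg_diam_def
    proof (rule SUP_least, rule SUP_least)
      fix X Y assume X: "X \<in> C" and Y: "Y \<in> C"
      let ?A = "zero_part E X" and ?B = "zero_part E Y"
      have "card ?A + card ?B = card (?A \<union> ?B) + card (?A \<inter> ?B)"
        using F(1) by (intro card_Un_Int) (auto simp: zero_part_finite)
      moreover have "card (?A \<union> ?B) \<le> card E" using F(1) by (intro card_mono) (auto simp: zero_part_def)
      ultimately have "card (?A \<inter> ?B) \<noteq> 0" using u X Y False less.prems(5) by auto
      then obtain e where e: "e \<in> ?A" "e \<in> ?B" by (metis card.empty disjoint_iff)
      have eE: "e \<in> E" "X e = Zero" "Y e = Zero" using e by (auto simp: zero_part_def)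
      have r1: "1 \<le> r - 1" using False by simp
      note cr = ctr_rank[OF om u ch eE(1) r1]
      have om': "oriented_matroid (E - {e}) (ctr C e)" by (rule ctr_om[OF om])
      have un': "uniform_om (E - {e}) (ctr C e)" using cr by (simp add: uniform_om_def)
      have cE': "card (E - {e}) = (r - 1) + k" using less.prems(5) eE F(1) False by simp
      have "cg_diam (E - {e}) (ctr C e) \<le> B"
        using less.IH[of "r - 1", OF _ om' un' cr(2) _ cE'] False by simp
      moreover have "cg_dist E C X Y \<le> cg_diam (E - {e}) (ctr C e)"
        using dist_ctr[of X C e Y E] X Y eE cr(2) less.prems(3) False F(1) by (simp add: ctr_def)
      ultimately show "cg_dist E C X Y \<le> B" by simp
    qed
  qed
qed



lemma list_lift: "set Ys \<subseteq> f ` A \<Longrightarrow> \<exists>Xs. Ys = map f Xs \<and> set Xs \<subseteq> A"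
proof (induction Ys)
  case Nil then show ?case by simp
next
  case (Cons y Ys)
  then obtain Xs where "Ys = map f Xs" "set Xs \<subseteq> A" by auto
  moreover obtain x where "x \<in> A" "y = f x" using Cons.prems by auto
  ultimately show ?case by (intro exI[of _ "x # Xs"]) auto
qed

lemma sep_iff: "x \<in> sep X Y \<longleftrightarrow> (X x = Pos \<and> Y x = Neg) \<or> (X x = Neg \<and> Y x = Pos)"
  by (auto simp: sep_def pos_part_def neg_part_def)

lemma transport:
  fixes E :: "'a set"
  assumes om: "oriented_matroid E C"
  shows "\<exists>(E'::nat set) C'. oriented_matroid E' C' \<and> card E' = card E \<and> om_rank C' = om_rank C \<and>
     (uniform_om E C \<longrightarrow> uniform_om E' C') \<and> cg_diam E C \<le> cg_diam E' C'"
proof -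
  note F = om_facts[OF om]
  define N where "N = card E"
  obtain h where bij: "bij_betw h {0..<N} E" using ex_bij_betw_nat_finite[OF F(1)] N_def by blast
  have hE: "i < N \<Longrightarrow> h i \<in> E" for i using bij by (auto simp: bij_betw_def)
  have hsurj: "x \<in> E \<Longrightarrow> \<exists>i<N. h i = x" for x using bij by (force simp: bij_betw_def)
  have hinj: "i < N \<Longrightarrow> j < N \<Longrightarrow> h i = h j \<Longrightarrow> i = j" for i j
    using bij by (auto simp: bij_betw_def inj_on_def)
  define E' where "E' = {0..<N}"
  define pl :: "'a signvec \<Rightarrow> nat signvec" where "pl X = (\<lambda>i. if i < N then X (h i) else Zero)" for X
  define C' where "C' = pl ` C"
  have pl_lt: "i < N \<Longrightarrow> pl X i = X (h i)" for X i by (simp add: pl_def)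
  have pl_ge: "\<not> i < N \<Longrightarrow> pl X i = Zero" for X i by (simp add: pl_def)
  have sv_out: "X \<in> signvecs E \<Longrightarrow> x \<notin> E \<Longrightarrow> X x = Zero" for X x by (simp add: signvecs_def)
  have pl_inj: "X = Y" if "X \<in> signvecs E" "Y \<in> signvecs E" "pl X = pl Y" for X Y
  proof (rule ext)
    fix x show "X x = Y x"
    proof (cases "x \<in> E")
      case True
      then obtain i where "i < N" "h i = x" using hsurj by blast
      then show ?thesis using fun_cong[OF that(3), of i] by (simp add: pl_def)
    next
      case False then show ?thesis using that(1,2) by (auto simp: signvecs_def)
    qed
  qed
  have pl_sv: "pl X \<in> signvecs E'" for X by (simp add: pl_def signvecs_def E'_def)
  have pl_zero: "pl zerovec = zerovec" by (auto simp: pl_def zerovec_def)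
  have pl_negv: "pl (negv X) = negv (pl X)" for X by (auto simp: pl_def negv_def)
  have pl_comp: "pl (comp X Y) = comp (pl X) (pl Y)" for X Y by (auto simp: pl_def comp_def)
  have pl_foldr: "pl (foldr comp Xs zerovec) = foldr comp (map pl Xs) zerovec" for Xs
    by (induction Xs) (simp_all add: pl_zero pl_comp)
  have CE: "C \<subseteq> signvecs E" by (rule F(2))
  have covE: "V \<in> covectors C \<Longrightarrow> V \<in> signvecs E" for V using cov_signvecs[OF CE] by blast
  have cov: "covectors C' = pl ` covectors C"
  proof
    show "covectors C' \<subseteq> pl ` covectors C"
    proof
      fix W assume W: "W \<in> covectors C'"
      show "W \<in> pl ` covectors C"
      proof (cases "W = zerovec")
        case True then show ?thesis using pl_zero zero_in_cov by (metis image_eqI)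
      next
        case False
        then obtain Ys where Ys: "W = foldr comp Ys zerovec" "Ys \<noteq> []" "set Ys \<subseteq> pl ` C"
          using W by (auto simp: covectors_def C'_def)
        then obtain Xs where Xs: "Ys = map pl Xs" "set Xs \<subseteq> C" using list_lift by blast
        then have "foldr comp Xs zerovec \<in> covectors C" using Ys(2) by (auto simp: covectors_def)
        moreover have "W = pl (foldr comp Xs zerovec)" using Ys(1) Xs(1) pl_foldr by simp
        ultimately show ?thesis by blast
      qed
    qed
  next
    show "pl ` covectors C \<subseteq> covectors C'"
    proof
      fix W assume "W \<in> pl ` covectors C"
      then obtain V where V: "V \<in> covectors C" "W = pl V" by blast
      show "W \<in> covectors C'"
      proof (cases "V = zerovec")
        case True then show ?thesis using V pl_zero zero_in_cov by simp
      next
        case False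
        then obtain Xs where Xs: "V = foldr comp Xs zerovec" "Xs \<noteq> []" "set Xs \<subseteq> C"
          using V(1) by (auto simp: covectors_def)
        then have "\<exists>Ys. W = foldr comp Ys zerovec \<and> Ys \<noteq> [] \<and> set Ys \<subseteq> C'"
          using V(2) pl_foldr by (intro exI[of _ "map pl Xs"]) (auto simp: C'_def)
        then show ?thesis unfolding covectors_def by simp
      qed
    qed
  qed
  have sle: "sv_le (pl V) (pl W) \<longleftrightarrow> sv_le V W" if "V \<in> signvecs E" "W \<in> signvecs E" for V W
  proof
    assume a: "sv_le (pl V) (pl W)"
    show "sv_le V W" unfolding sv_le_def
    proof
      fix x show "V x = Zero \<or> V x = W x"
      proof (cases "x \<in> E")
        case True
        then obtain i where "i < N" "h i = x" using hsurj by blast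
        moreover have "pl V i = Zero \<or> pl V i = pl W i" using a by (simp add: sv_le_def)
        ultimately show ?thesis by (simp add: pl_def)
      next
        case False then show ?thesis using that(1,2) by (auto simp: signvecs_def)
      qed
    qed
  next
    assume "sv_le V W" then show "sv_le (pl V) (pl W)" by (auto simp: sv_le_def pl_def)
  qed
  have sls: "sv_less (pl V) (pl W) \<longleftrightarrow> sv_less V W" if "V \<in> signvecs E" "W \<in> signvecs E" for V W
    using sle[OF that] pl_inj[OF that] by (auto simp: sv_less_def)
  have chains: "(\<exists>V. is_chain C m V) \<longleftrightarrow> (\<exists>V'. is_chain C' m V')" for m
  proof
    assume "\<exists>V. is_chain C m V"
    then obtain V where V: "is_chain C m V" by blast
    have "is_chain C' m (\<lambda>i. pl (V i))"
      using V cov sls covE pl_zero unfolding is_chain_def by (auto simp: Suc_le_eq)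
    then show "\<exists>V'. is_chain C' m V'" by blast
  next
    assume "\<exists>V'. is_chain C' m V'"
    then obtain V' where V': "is_chain C' m V'" by blast
    define W where "W i = inv_into (covectors C) pl (V' i)" for i
    have Wi: "W i \<in> covectors C \<and> pl (W i) = V' i" if "i \<le> m" for i
    proof -
      have "V' i \<in> pl ` covectors C" using V' that cov by (auto simp: is_chain_def)
      then show ?thesis by (simp add: W_def inv_into_into f_inv_into_f)
    qed
    have "W 0 = zerovec"
      using Wi[of 0] V' pl_zero pl_inj[OF covE[of "W 0"] covE[OF zero_in_cov]] by (auto simp: is_chain_def)
    moreover have "\<forall>i<m. sv_less (W i) (W (Suc i))"
    proof (intro allI impI)
      fix i assume i: "i < m"
      then have "sv_less (V' i) (V' (Suc i))" using V' by (auto simp: is_chain_def)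
      moreover have a: "W i \<in> covectors C" "pl (W i) = V' i" using Wi[of i] i by auto
      moreover have b: "W (Suc i) \<in> covectors C" "pl (W (Suc i)) = V' (Suc i)" using Wi[of "Suc i"] i by auto
      ultimately show "sv_less (W i) (W (Suc i))" using sls[OF covE[OF a(1)] covE[OF b(1)]] by simp
    qed
    ultimately have "is_chain C m W" using Wi unfolding is_chain_def by auto
    then show "\<exists>V. is_chain C m V" by blast
  qed
  have rank: "om_rank C' = om_rank C" unfolding om_rank_chain using chains by simp
  have card_pull: "card {i. i < N \<and> P (h i)} = card {x\<in>E. P x}" for P
  proof -
    have "h ` {i. i < N \<and> P (h i)} = {x\<in>E. P x}" using hE hsurj by force
    moreover have "inj_on h {i. i < N \<and> P (h i)}" using hinj by (auto simp: inj_on_def)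
    ultimately show ?thesis by (metis card_image)
  qed
  have zp: "zero_part E' (pl X) = {i. i < N \<and> X (h i) = Zero}" for X
    by (auto simp: zero_part_def E'_def pl_def)
  have czp: "card (zero_part E' (pl X)) = card (zero_part E X)" for X
    unfolding zp using card_pull[of "\<lambda>x. X x = Zero"] by (simp add: zero_part_def)
  have czp2: "card (zero_part E' (pl X) \<inter> zero_part E' (pl Y)) = card (zero_part E X \<inter> zero_part E Y)" for X Y
  proof -
    have "zero_part E' (pl X) \<inter> zero_part E' (pl Y) = {i. i < N \<and> X (h i) = Zero \<and> Y (h i) = Zero}"
      unfolding zp by auto
    moreover have "zero_part E X \<inter> zero_part E Y = {x\<in>E. X x = Zero \<and> Y x = Zero}"
      by (auto simp: zero_part_def)
    ultimately show ?thesis using card_pull[of "\<lambda>x. X x = Zero \<and> Y x = Zero"] by simp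
  qed
  have om': "oriented_matroid E' C'"
  proof -
    have 1: "finite E'" by (simp add: E'_def)
    have 2: "C' \<subseteq> signvecs E'" using pl_sv by (auto simp: C'_def)
    have 3: "zerovec \<notin> C'"
    proof
      assume "zerovec \<in> C'"
      then obtain X where "X \<in> C" "pl X = pl zerovec" using pl_zero by (auto simp: C'_def)
      then have "X = zerovec" using pl_inj CE covE zero_in_cov by blast
      then show False using F(3) \<open>X \<in> C\<close> by simp
    qed
    have 4: "\<forall>X\<in>C'. negv X \<in> C'"
    proof
      fix X' assume "X' \<in> C'"
      then obtain X where "X \<in> C" "X' = pl X" by (auto simp: C'_def)
      then have "negv X' = pl (negv X)" "negv X \<in> C" using F(4) pl_negv by auto
      then show "negv X' \<in> C'" by (auto simp: C'_def)
    qed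
    have 5: "\<forall>X\<in>C'. \<forall>Y\<in>C'. supp X \<subseteq> supp Y \<longrightarrow> X = Y \<or> X = negv Y"
    proof (intro ballI impI)
      fix X' Y' assume "X' \<in> C'" "Y' \<in> C'" and s: "supp X' \<subseteq> supp Y'"
      then obtain X Y where XY: "X \<in> C" "Y \<in> C" "X' = pl X" "Y' = pl Y" by (auto simp: C'_def)
      have "supp X \<subseteq> supp Y"
      proof
        fix x assume x: "x \<in> supp X"
        then have "x \<in> E" using CE XY(1) by (auto simp: supp_iff signvecs_def)
        then obtain i where i: "i < N" "h i = x" using hsurj by blast
        then have "i \<in> supp X'" using x XY by (simp add: supp_iff pl_def)
        then have "i \<in> supp Y'" using s by blast
        then show "x \<in> supp Y" using i XY by (simp add: supp_iff pl_def)
      qed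
      then have "X = Y \<or> X = negv Y" using F(5) XY by blast
      then show "X' = Y' \<or> X' = negv Y'" using XY pl_negv by auto
    qed
    have 6: "\<forall>X\<in>C'. \<forall>Y\<in>C'. \<forall>e. X \<noteq> negv Y \<and> e \<in> sep X Y \<longrightarrow>
        (\<exists>Z\<in>C'. pos_part Z \<subseteq> (pos_part X \<union> pos_part Y) - {e} \<and>
                neg_part Z \<subseteq> (neg_part X \<union> neg_part Y) - {e})"
    proof (intro ballI allI impI)
      fix X' Y' i assume "X' \<in> C'" "Y' \<in> C'" and h1: "X' \<noteq> negv Y' \<and> i \<in> sep X' Y'"
      then obtain X Y where XY: "X \<in> C" "Y \<in> C" "X' = pl X" "Y' = pl Y" by (auto simp: C'_def)
      have iN: "i < N" using h1 XY pl_ge by (auto simp: sep_iff)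
      have "X \<noteq> negv Y" using h1 XY pl_negv by auto
      moreover have "h i \<in> sep X Y" using h1 XY iN by (simp add: sep_iff pl_def)
      ultimately obtain Z where Z: "Z \<in> C" "pos_part Z \<subseteq> (pos_part X \<union> pos_part Y) - {h i}"
        "neg_part Z \<subseteq> (neg_part X \<union> neg_part Y) - {h i}" using F(6) XY by blast
      have "pos_part (pl Z) \<subseteq> (pos_part X' \<union> pos_part Y') - {i}"
      proof
        fix j assume j: "j \<in> pos_part (pl Z)"
        then have jN: "j < N" using pl_ge by (force simp: pos_part_def)
        then have "h j \<in> pos_part Z" using j by (simp add: pos_part_def pl_def)
        then have "h j \<in> (pos_part X \<union> pos_part Y) - {h i}" using Z by blast
        then show "j \<in> (pos_part X' \<union> pos_part Y') - {i}" using XY jN by (auto simp: pos_part_def pl_def)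
      qed
      moreover have "neg_part (pl Z) \<subseteq> (neg_part X' \<union> neg_part Y') - {i}"
      proof
        fix j assume j: "j \<in> neg_part (pl Z)"
        then have jN: "j < N" using pl_ge by (force simp: neg_part_def)
        then have "h j \<in> neg_part Z" using j by (simp add: neg_part_def pl_def)
        then have "h j \<in> (neg_part X \<union> neg_part Y) - {h i}" using Z by blast
        then show "j \<in> (neg_part X' \<union> neg_part Y') - {i}" using XY jN by (auto simp: neg_part_def pl_def)
      qed
      ultimately show "\<exists>Z\<in>C'. pos_part Z \<subseteq> (pos_part X' \<union> pos_part Y') - {i} \<and>
                neg_part Z \<subseteq> (neg_part X' \<union> neg_part Y') - {i}" using Z(1) by (auto simp: C'_def)
    qed
    show ?thesis unfolding oriented_matroid_def using 1 2 3 4 5 6 by blast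
  qed
  have unif: "uniform_om E C \<longrightarrow> uniform_om E' C'"
    using czp rank by (auto simp: uniform_om_def C'_def)
  have cardE': "card E' = card E" by (simp add: E'_def N_def)
  have adj: "cg_adj E C a b" if "a \<in> C" "b \<in> C" "cg_adj E' C' (pl a) (pl b)" for a b
  proof -
    have "a \<noteq> b" using that(3) by (auto simp: cg_adj_def)
    moreover have "sep a b = {}"
    proof (rule ccontr)
      assume "sep a b \<noteq> {}"
      then obtain x where x: "x \<in> sep a b" by blast
      have "a x \<noteq> Zero" using x by (auto simp: sep_iff)
      then have "x \<in> E" using CE that(1) by (auto simp: signvecs_def)
      then obtain i where "i < N" "h i = x" using hsurj by blast
      then have "i \<in> sep (pl a) (pl b)" using x by (simp add: sep_iff pl_def)
      then show False using that(3) by (auto simp: cg_adj_def)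
    qed
    ultimately show ?thesis using that czp2 rank by (auto simp: cg_adj_def)
  qed
  have "cg_dist E C X Y \<le> cg_diam E' C'" if X: "X \<in> C" and Y: "Y \<in> C" for X Y
  proof -
    have "{n. cg_walk E' C' n (pl X) (pl Y)} \<subseteq> {n. cg_walk E C n X Y}"
    proof
      fix n assume "n \<in> {n. cg_walk E' C' n (pl X) (pl Y)}"
      then obtain p where p: "p 0 = pl X" "p n = pl Y" "\<forall>i\<le>n. p i \<in> C'"
        "\<forall>i<n. cg_adj E' C' (p i) (p (Suc i))" by (auto simp: cg_walk_def)
      define q where "q i = inv_into C pl (p i)" for i
      have q: "q i \<in> C \<and> pl (q i) = p i" if "i \<le> n" for i
        using p(3) that by (auto simp: q_def C'_def inv_into_into f_inv_into_f)
      have "q 0 = X" using q[of 0] p(1) pl_inj CE X by auto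
      moreover have "q n = Y" using q[of n] p(2) pl_inj CE Y by auto
      moreover have "\<forall>i<n. cg_adj E C (q i) (q (Suc i))"
        using q p(4) adj by (metis Suc_leI less_imp_le_nat)
      ultimately have "cg_walk E C n X Y" using q unfolding cg_walk_def by blast
      then show "n \<in> {n. cg_walk E C n X Y}" by simp
    qed
    then have "cg_dist E C X Y \<le> cg_dist E' C' (pl X) (pl Y)"
      unfolding cg_dist_def by (rule INF_superset_mono) simp
    also have "\<dots> \<le> cg_diam E' C'"
      unfolding cg_diam_def
      by (rule SUP_upper2[of "pl X"], simp add: C'_def X, rule SUP_upper, simp add: C'_def Y)
    finally show ?thesis .
  qed
  then have "cg_diam E C \<le> cg_diam E' C'" unfolding cg_diam_def[of E C]
    by (intro SUP_least) auto
  then show ?thesis using om' cardE' rank unif by blast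
qed


theorem theorem4p4:
  fixes E :: "'a set" and C :: "'a signvec set" and r k :: nat
  assumes "oriented_matroid E C"
    and "uniform_om E C"
    and "om_rank C = r"
    and "r \<ge> 2"
    and "card E = r + k"
  shows "cg_diam E C \<le>
    Sup {cg_diam E' C' | (E' :: nat set) C' r'.
           2 \<le> r' \<and> r' \<le> k + 2 \<and> oriented_matroid E' C' \<and> uniform_om E' C' \<and>
           om_rank C' = r' \<and> card E' = r' + k}"
proof -
  let ?S = "{cg_diam E' C' | (E' :: nat set) C' r'.
           2 \<le> r' \<and> r' \<le> k + 2 \<and> oriented_matroid E' C' \<and> uniform_om E' C' \<and>
           om_rank C' = r' \<and> card E' = r' + k}"
  have base: "cg_diam E0 C0 \<le> Sup ?S"
    if a: "oriented_matroid E0 C0" "uniform_om E0 C0" "om_rank C0 = r0" "2 \<le> r0" "r0 \<le> k + 2"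
      "card E0 = r0 + k" for E0 :: "'a set" and C0 r0
  proof -
    obtain E' :: "nat set" and C' where t: "oriented_matroid E' C'" "card E' = card E0"
      "om_rank C' = om_rank C0" "uniform_om E0 C0 \<longrightarrow> uniform_om E' C'" "cg_diam E0 C0 \<le> cg_diam E' C'"
      using transport[OF a(1)] by blast
    have "cg_diam E' C' \<in> ?S" using t a by auto
    then show ?thesis using t(5) by (meson Sup_upper order_trans)
  qed
  show ?thesis by (rule main_ind[OF base assms])
qed

end
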